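(* Let $(G,k)$ be an instance and let $v\in V$ satisfy $|N(v)|>7k$ and $\rho(v)\le \frac{|N(v)|(|N(v)|-1)}{4}$. Then for every feasible solution $X$ with $v\notin X$, the connected component of $G-X$ containing $v$ is a tree.
   Context: Graphs are undirected, without self-loops, possibly with multi-edges. $N(v)$ is the set of vertices adjacent to $v$; $\rho(v)$ is the number of unordered pairs $\{u_1,u_2\}\subseteq N(v)$ joined by at least one edge (parallel edges counted once). A vertex set induces a clique if between any two distinct vertices of it there is exactly one edge, and a tree if it is connected and has no cycle (two parallel edges form a cycle). For an integer $k\ge1$, a feasible solution is a set $X\subseteq V$ with $|X|\le k$ such that every connected component of $G-X$ is a clique or a tree. *)

theory Defs
  imports Complex_Main
begin

text \<open>A finite undirected multigraph without self-loops, given by a vertex set V and an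
  edge-multiplicity function m (m u w = number of parallel edges between u and w).\<close>
definition multigraph :: "'a set \<Rightarrow> ('a \<Rightarrow> 'a \<Rightarrow> nat) \<Rightarrow> bool" where
  "multigraph V m \<longleftrightarrow> finite V \<and> (\<forall>u w. m u w = m w u) \<and> (\<forall>u. m u u = 0)
     \<and> (\<forall>u w. 0 < m u w \<longrightarrow> u \<in> V \<and> w \<in> V)"

definition adj :: "('a \<Rightarrow> 'a \<Rightarrow> nat) \<Rightarrow> 'a \<Rightarrow> 'a \<Rightarrow> bool" where
  "adj m u w \<longleftrightarrow> 0 < m u w"

definition nbhd :: "'a set \<Rightarrow> ('a \<Rightarrow> 'a \<Rightarrow> nat) \<Rightarrow> 'a \<Rightarrow> 'a set" where
  "nbhd V m v = {u \<in> V. adj m v u}"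

definition rho :: "'a set \<Rightarrow> ('a \<Rightarrow> 'a \<Rightarrow> nat) \<Rightarrow> 'a \<Rightarrow> nat" where
  "rho V m v = card {{u1, u2} | u1 u2. u1 \<in> nbhd V m v \<and> u2 \<in> nbhd V m v \<and> u1 \<noteq> u2 \<and> adj m u1 u2}"

definition adj_in :: "'a set \<Rightarrow> ('a \<Rightarrow> 'a \<Rightarrow> nat) \<Rightarrow> 'a \<Rightarrow> 'a \<Rightarrow> bool" where
  "adj_in S m u w \<longleftrightarrow> u \<in> S \<and> w \<in> S \<and> adj m u w"

definition component :: "'a set \<Rightarrow> ('a \<Rightarrow> 'a \<Rightarrow> nat) \<Rightarrow> 'a \<Rightarrow> 'a set" where
  "component S m v = {u. (adj_in S m)\<^sup>*\<^sup>* v u}"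

definition components :: "'a set \<Rightarrow> ('a \<Rightarrow> 'a \<Rightarrow> nat) \<Rightarrow> 'a set set" where
  "components S m = component S m ` S"

definition induces_connected :: "'a set \<Rightarrow> ('a \<Rightarrow> 'a \<Rightarrow> nat) \<Rightarrow> bool" where
  "induces_connected S m \<longleftrightarrow> S \<noteq> {} \<and> (\<forall>a\<in>S. \<forall>b\<in>S. (adj_in S m)\<^sup>*\<^sup>* a b)"

definition induces_clique :: "'a set \<Rightarrow> ('a \<Rightarrow> 'a \<Rightarrow> nat) \<Rightarrow> bool" where
  "induces_clique S m \<longleftrightarrow> (\<forall>a\<in>S. \<forall>b\<in>S. a \<noteq> b \<longrightarrow> m a b = 1)"

text \<open>A cycle in the subgraph induced by S: either two parallel edges (a 2-cycle),
  or a sequence of at least 3 distinct vertices, consecutive ones adjacent, last adjacent to first.\<close>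
definition has_cycle :: "'a set \<Rightarrow> ('a \<Rightarrow> 'a \<Rightarrow> nat) \<Rightarrow> bool" where
  "has_cycle S m \<longleftrightarrow>
     (\<exists>a\<in>S. \<exists>b\<in>S. 2 \<le> m a b) \<or>
     (\<exists>xs. 3 \<le> length xs \<and> distinct xs \<and> set xs \<subseteq> S
        \<and> (\<forall>i. Suc i < length xs \<longrightarrow> adj m (xs ! i) (xs ! Suc i))
        \<and> adj m (last xs) (hd xs))"

definition induces_tree :: "'a set \<Rightarrow> ('a \<Rightarrow> 'a \<Rightarrow> nat) \<Rightarrow> bool" where
  "induces_tree S m \<longleftrightarrow> induces_connected S m \<and> \<not> has_cycle S m"

definition feasible :: "'a set \<Rightarrow> ('a \<Rightarrow> 'a \<Rightarrow> nat) \<Rightarrow> nat \<Rightarrow> 'a set \<Rightarrow> bool" where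
  "feasible V m k X \<longleftrightarrow> X \<subseteq> V \<and> card X \<le> k \<and>
     (\<forall>C\<in>components (V - X) m. induces_clique C m \<or> induces_tree C m)"

end

theory Submission
  imports Defs
begin

lemma pairs_card:
  assumes "finite S"
  shows "card {{u1, u2} | u1 u2. u1 \<in> S \<and> u2 \<in> S \<and> u1 \<noteq> u2} = card S choose 2"
proof -
  have "{{u1, u2} | u1 u2. u1 \<in> S \<and> u2 \<in> S \<and> u1 \<noteq> u2} = {B. B \<subseteq> S \<and> card B = 2}"
    by (auto simp: card_2_iff)
  then show ?thesis using n_subsets[OF assms, of 2] by simp
qed

lemma arith_main:
  fixes s d k :: nat
  assumes "s + k \<ge> d" "d > 7 * k" "k \<ge> 1"
  shows "d * (d - 1) < 2 * (s * (s - 1))"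
proof -
  obtain e where e: "d = k + e" using assms le_Suc_ex[of k d] by fastforce
  have e1: "e \<ge> 6*k+1" using assms e by simp
  have se: "s \<ge> e" using assms e by simp
  have "e * (e - 1) \<le> s * (s - 1)" using se by (simp add: mult_le_mono)
  have a: "(6*k+1) * (4*k) \<le> e * (e - 1 - 2*k)" using e1 by (intro mult_le_mono) auto
  have "int e * (int e - 1 - 2 * int k) > int k * int k - int k"
  proof -
    have "int e - 1 - 2 * int k = int (e - 1 - 2*k)" using e1 by simp
    then have "int e * (int e - 1 - 2 * int k) = int (e * (e - 1 - 2*k))" by simp
    moreover have "int ((6*k+1) * (4*k)) \<le> int (e * (e - 1 - 2*k))" using a by linarith
    moreover have "int ((6*k+1) * (4*k)) > int k * int k - int k" 
    proof -
      have "int ((6*k+1) * (4*k)) = 24 * (int k * int k) + 4 * int k" by (simp add: algebra_simps)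
      moreover have "int k * int k \<ge> 0" by simp
      ultimately show ?thesis using assms(3) by linarith
    qed
    ultimately show ?thesis by linarith
  qed
  then have "int d * (int d - 1) < 2 * (int e * (int e - 1))"
    using e by (simp add: algebra_simps)
  moreover have "int d * (int d - 1) = int (d * (d - 1))" using assms by (simp add: of_nat_diff)
  moreover have "int e * (int e - 1) = int (e * (e - 1))" using e1 by (simp add: of_nat_diff)
  ultimately have "d * (d - 1) < 2 * (e * (e - 1))" by linarith
  with \<open>e * (e - 1) \<le> s * (s - 1)\<close> show ?thesis by linarith
qed

theorem mainTheorem3:
  fixes V :: "'a set" and m :: "'a \<Rightarrow> 'a \<Rightarrow> nat" and k :: nat and v :: 'a
  assumes "multigraph V m" and "1 \<le> k" and "v \<in> V"
    and "card (nbhd V m v) > 7 * k"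
    and "real (rho V m v) \<le> real (card (nbhd V m v)) * (real (card (nbhd V m v)) - 1) / 4"
  shows "\<forall>X. feasible V m k X \<and> v \<notin> X \<longrightarrow> induces_tree (component (V - X) m v) m"
proof (intro allI impI)
  fix X assume H: "feasible V m k X \<and> v \<notin> X"
  define C where "C = component (V - X) m v"
  define N where "N = nbhd V m v"
  define S where "S = N - X"
  have finV: "finite V" using assms(1) by (simp add: multigraph_def)
  have finN: "finite N" using finV by (simp add: N_def nbhd_def)
  have XV: "X \<subseteq> V" and cX: "card X \<le> k" using H by (auto simp: feasible_def)
  have finX: "finite X" using XV finV finite_subset by blast
  have "C \<in> components (V - X) m" using H assms(3) by (auto simp: C_def components_def)
  then have cases: "induces_clique C m \<or> induces_tree C m" using H by (auto simp: feasible_def)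
  show "induces_tree C m"
  proof (rule ccontr)
    assume nt: "\<not> induces_tree C m"
    with cases have cl: "induces_clique C m" by blast
    have SC: "S \<subseteq> C"
    proof
      fix u assume "u \<in> S"
      then have "adj_in (V - X) m v u" using H assms(3)
        by (auto simp: S_def N_def nbhd_def adj_in_def)
      then show "u \<in> C" by (simp add: C_def component_def)
    qed
    have sub: "{{u1, u2} | u1 u2. u1 \<in> S \<and> u2 \<in> S \<and> u1 \<noteq> u2}
       \<subseteq> {{u1, u2} | u1 u2. u1 \<in> N \<and> u2 \<in> N \<and> u1 \<noteq> u2 \<and> adj m u1 u2}"
    proof
      fix P assume "P \<in> {{u1, u2} | u1 u2. u1 \<in> S \<and> u2 \<in> S \<and> u1 \<noteq> u2}"
      then obtain u1 u2 where P: "P = {u1, u2}" "u1 \<in> S" "u2 \<in> S" "u1 \<noteq> u2" by blast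
      then have "m u1 u2 = 1" using cl SC by (auto simp: induces_clique_def)
      then have "adj m u1 u2" by (simp add: adj_def)
      with P show "P \<in> {{u1, u2} | u1 u2. u1 \<in> N \<and> u2 \<in> N \<and> u1 \<noteq> u2 \<and> adj m u1 u2}"
        by (auto simp: S_def)
    qed
    have fin2: "finite {{u1, u2} | u1 u2. u1 \<in> N \<and> u2 \<in> N \<and> u1 \<noteq> u2 \<and> adj m u1 u2}"
      by (rule finite_subset[of _ "Pow N"]) (use finN in auto)
    have "card S choose 2 \<le> rho V m v"
      using card_mono[OF fin2 sub] pairs_card[of S] finN
      by (simp add: S_def rho_def N_def[symmetric])
    then have r1: "real (card S choose 2) \<le> real (card N) * (real (card N) - 1) / 4"
      using assms(5) unfolding N_def by (meson of_nat_le_iff order_trans)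
    have c2: "2 * (card S choose 2) = card S * (card S - 1)"
    proof -
      have "even (card S * (card S - 1))" by (cases "even (card S)") auto
      then show ?thesis by (simp add: choose_two)
    qed
    have "card S + k \<ge> card N"
      using card_Diff_subset_Int[of X N] finX finN cX unfolding S_def
      using diff_card_le_card_Diff[OF finX, of N] by linarith
    then have ar: "card N * (card N - 1) < 2 * (card S * (card S - 1))"
      using arith_main assms(2,4) N_def by blast
    have cN: "card N \<ge> 1" using assms(4) N_def by simp
    moreover have "real (card N * (card N - 1)) = real (card N) * (real (card N) - 1)"
      using cN by (simp add: of_nat_diff)
    ultimately have "real (4 * (card S choose 2)) \<le> real (card N * (card N - 1))"
      using r1 by simp
    then have "4 * (card S choose 2) \<le> card N * (card N - 1)" by (simp only: of_nat_le_iff)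
    then show False using ar c2 by linarith
  qed
qed

end
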